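(* Let $\rho$ be a measure on $(0,\infty)$ with $\rho((b,\infty))<\infty$ for all $b>0$. Then $\mathfrak{A}(\rho)$ and $\mathfrak{A}(\mathfrak{A}(\rho))$ are definable and $\mathfrak{A}(\mathfrak{A}(\rho))(\mathrm{d}u)=\rho((u,\infty))\,\mathrm{d}u$. In particular, among measures $\rho$ on $(0,\infty)$ satisfying $\rho((b,\infty))<\infty$ for all $b>0$, $\rho$ is determined by $\mathfrak{A}(\rho)$.
   Context: For a measure $\rho$ on $(0,\infty)$, $\mathfrak{A}(\rho)$ is said to be definable if the function $u\mapsto\int_{(u,\infty)}\pi^{-1/2}(s-u)^{-1/2}\rho(\mathrm{d}s)$ is the Lebesgue density on $(0,\infty)$ of a measure $\sigma$ on $(0,\infty)$ that is locally finite (i.e. $\sigma((b,c))<\infty$ for $0<b<c<\infty$); then $\mathfrak{A}(\rho)$ denotes that measure. *)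

theory Defs
  imports "HOL-Analysis.Analysis"
begin

definition lpos :: "real measure" where
  "lpos = restrict_space lborel {0<..}"

definition abel_fun :: "real measure \<Rightarrow> real \<Rightarrow> ennreal" where
  "abel_fun \<rho> u = (\<integral>\<^sup>+ s. indicator {u<..} s * ennreal (1 / sqrt (pi * (s - u))) \<partial>\<rho>)"

definition abel :: "real measure \<Rightarrow> real measure" where
  "abel \<rho> = density lpos (abel_fun \<rho>)"

definition abel_definable :: "real measure \<Rightarrow> bool" where
  "abel_definable \<rho> \<longleftrightarrow> (\<forall>b c. 0 < b \<longrightarrow> b < c \<longrightarrow> emeasure (abel \<rho>) {b<..<c} < \<infinity>)"

end

theory Submission imports Defs begin

definition K :: "real \<Rightarrow> ennreal" where
  "K x = (if 0 < x then ennreal (1 / sqrt (pi * x)) else 0)"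

lemma K_meas[measurable]: "K \<in> borel_measurable borel"
  unfolding K_def by measurable

lemma abel_fun_K: "abel_fun \<mu> u = (\<integral>\<^sup>+ s. K (s - u) \<partial>\<mu>)"
  unfolding abel_fun_def K_def by (intro nn_integral_cong) (auto simp: indicator_def)

lemma powr_mhalf: "0 < (y::real) \<Longrightarrow> y powr (-1/2) = 1 / sqrt y"
proof -
  assume y: "0 < y"
  have "y powr (-1/2) = y powr (-(1/2))" by simp
  also have "\<dots> = inverse (y powr (1/2))" by (rule powr_minus)
  also have "\<dots> = inverse (sqrt y)" using y by (simp add: powr_half_sqrt)
  finally show ?thesis by (simp add: inverse_eq_divide)
qed

lemma beta_half: "((\<lambda>y. y powr (-1/2) * (1 - y) powr (-1/2)) has_integral pi) {0..1}"
proof -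
  have "Beta (1/2) (1/2) = pi"
    by (simp add: Beta_def Gamma_one_half_real)
  with has_integral_Beta_real[of "1/2" "1/2"] show ?thesis by simp
qed

lemma K_beta:
  assumes "a < t"
  shows "(\<integral>\<^sup>+ x. K (x - a) * K (t - x) \<partial>lborel) = 1"
proof -
  define L where "L = t - a"
  have L: "L > 0" using assms by (simp add: L_def)
  have "(\<integral>\<^sup>+ x. K (x - a) * K (t - x) \<partial>lborel)
      = ennreal \<bar>L\<bar> * (\<integral>\<^sup>+ y. K (a + L * y - a) * K (t - (a + L * y)) \<partial>lborel)"
    using L by (intro nn_integral_real_affine) auto
  also have "\<dots> = (\<integral>\<^sup>+ y. ennreal L * (K (L * y) * K (L * (1 - y))) \<partial>lborel)"
    using L by (subst nn_integral_cmult) (auto simp: L_def algebra_simps)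
  also have "\<dots> = (\<integral>\<^sup>+ y. ennreal (indicator {0..1} y * ((1/pi) * (y powr (-1/2) * (1 - y) powr (-1/2)))) \<partial>lborel)"
  proof (intro nn_integral_cong)
    fix y :: real
    show "ennreal L * (K (L * y) * K (L * (1 - y))) = ennreal (indicator {0..1} y * ((1/pi) * (y powr (-1/2) * (1 - y) powr (-1/2))))"
    proof (cases "0 < y \<and> y < 1")
      case True
      have "L * (1 / sqrt (pi * (L * y)) * (1 / sqrt (pi * (L * (1 - y)))))
          = (1/pi) * (y powr (-1/2) * (1 - y) powr (-1/2))"
      proof -
        have s1: "sqrt (pi * (L * y)) = sqrt pi * sqrt L * sqrt y" by (simp add: real_sqrt_mult)
        have s2: "sqrt (pi * (L * (1 - y))) = sqrt pi * sqrt L * sqrt (1 - y)" by (simp add: real_sqrt_mult)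
        have p1: "y powr (-1/2) = 1 / sqrt y" using True by (intro powr_mhalf) simp
        have p2: "(1 - y) powr (-1/2) = 1 / sqrt (1 - y)" using True by (intro powr_mhalf) simp
        have q: "sqrt pi * sqrt pi = pi" "sqrt L * sqrt L = L" using L by auto
        have gen: "\<And>A B C D::real. A*A = pi \<Longrightarrow> B*B = L \<Longrightarrow>
            L * (1 / (A * B * C) * (1 / (A * B * D))) = 1/pi * (1 / C * (1 / D))"
          using L by (simp add: divide_simps mult_ac)
        show ?thesis unfolding s1 s2 p1 p2 by (rule gen[OF q])
      qed
      then show ?thesis using True L
        by (simp add: K_def ennreal_mult'[symmetric] indicator_def)
    next
      case False
      then show ?thesis using L
        by (auto simp: K_def indicator_def zero_less_mult_iff not_less)
    qed
  qed
  also have "\<dots> = ennreal 1"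
  proof -
    have "((\<lambda>y. (1/pi) * (y powr (-1/2) * (1 - y) powr (-1/2))) has_integral (1/pi) * pi) {0..1}"
      by (intro has_integral_mult_right beta_half)
    then have "integral\<^sup>N lborel (\<lambda>y. indicator {0..1} y * ((1/pi) * (y powr (-1/2) * (1 - y) powr (-1/2)))) = (1/pi) * pi"
      by (intro nn_integral_has_integral_lebesgue) auto
    then show ?thesis by simp
  qed
  finally show ?thesis by simp
qed


lemma space_lpos: "space lpos = {0<..}"
  by (simp add: lpos_def space_restrict_space)

lemma sets_lpos: "sets lpos = sets (restrict_space borel ({0<..}::real set))"
  unfolding lpos_def by (rule sets_restrict_space_cong) simp

lemma lpos_meas: "(\<lambda>x. x) \<in> measurable lpos borel"
  unfolding lpos_def by (rule measurable_restrict_space1) simp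

lemma sigma_finite_lpos: "sigma_finite_measure lpos"
  unfolding lpos_def
  by (rule sigma_finite_measure_restrict_space) (auto simp: lborel.sigma_finite_measure_axioms)

lemma nn_integral_lpos:
  "(\<integral>\<^sup>+ x. f x \<partial>lpos) = (\<integral>\<^sup>+ x. f x * indicator {0<..} x \<partial>lborel)"
  unfolding lpos_def by (rule nn_integral_restrict_space) simp

lemma emeasure_lpos_Ioo:
  assumes "0 \<le> b" "b \<le> c" shows "emeasure lpos {b<..<c} = ennreal (c - b)"
  unfolding lpos_def using assms by (subst emeasure_restrict_space) auto

lemma Ioo_lpos: "0 \<le> b \<Longrightarrow> {b<..<c} \<in> sets lpos"
  unfolding sets_lpos sets_restrict_space by (auto intro!: image_eqI[where x="{b<..<c}"])

context
  fixes \<mu> :: "real measure"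
  assumes S: "sets \<mu> = sets (restrict_space borel {0<..})"
begin

lemma space_mu: "space \<mu> = {0<..}"
  using sets_eq_imp_space_eq[OF S] by (simp add: space_restrict_space)

lemma mu_meas: "(\<lambda>x. x) \<in> measurable \<mu> borel"
  by (subst measurable_cong_sets[OF S refl]) (rule measurable_restrict_space1, simp)

lemma Ioi_mu: "0 \<le> u \<Longrightarrow> {u<..} \<in> sets \<mu>"
  unfolding S sets_restrict_space by (auto intro!: image_eqI[where x="{u<..}"])

lemma sigma_finite_mu:
  assumes T: "\<And>b. b > 0 \<Longrightarrow> emeasure \<mu> {b<..} < \<infinity>"
  shows "sigma_finite_measure \<mu>"
proof
  let ?A = "range (\<lambda>n::nat. {1 / Suc n <..})"
  have "\<Union> ?A = ({0<..}::real set)"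
  proof (auto)
    fix x :: real assume "0 < x"
    then obtain n where "1 / Suc n < x"
      using reals_Archimedean by (metis of_nat_Suc inverse_eq_divide)
    then show "\<exists>n. 1 / (1 + real n) < x" by auto
  next
    fix x :: real and n :: nat assume "1 / (1 + real n) < x"
    moreover have "0 < 1 / (1 + real n)" by simp
    ultimately show "0 < x" by linarith
  qed
  then show "\<exists>A. countable A \<and> A \<subseteq> sets \<mu> \<and> \<Union> A = space \<mu> \<and> (\<forall>a\<in>A. emeasure \<mu> a \<noteq> \<infinity>)"
  proof (intro exI[of _ ?A] conjI)
    show "\<forall>a\<in>?A. emeasure \<mu> a \<noteq> \<infinity>"
    proof
      fix a assume "a \<in> ?A"
      then obtain n where "a = {1 / Suc n <..}" by auto
      moreover have "(0::real) < 1 / Suc n" by simp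
      ultimately show "emeasure \<mu> a \<noteq> \<infinity>" using T[of "1 / Suc n"] by (simp del: of_nat_Suc)
    qed
  qed (auto simp: space_mu intro!: Ioi_mu)
qed

lemma abel_fun_meas:
  assumes "sigma_finite_measure \<mu>"
  shows "abel_fun \<mu> \<in> borel_measurable lpos"
proof -
  interpret sigma_finite_measure \<mu> by fact
  have "(\<lambda>p. snd p - fst p) \<in> borel_measurable (lpos \<Otimes>\<^sub>M \<mu>)"
    by (intro borel_measurable_diff measurable_compose[OF measurable_snd mu_meas]
         measurable_compose[OF measurable_fst lpos_meas])
  then have "case_prod (\<lambda>u s. K (s - u)) \<in> borel_measurable (lpos \<Otimes>\<^sub>M \<mu>)"
    by (simp add: case_prod_beta' measurable_compose[OF _ K_meas])
  from borel_measurable_nn_integral[OF this] show ?thesis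
    by (simp add: abel_fun_K[abs_def])
qed

end


lemma sets_abel: "sets (abel \<mu>) = sets (restrict_space borel ({0<..}::real set))"
  by (simp add: abel_def sets_lpos)

lemma sigma_finite_loc:
  assumes S: "sets \<nu> = sets (restrict_space borel ({0<..}::real set))"
    and T: "\<And>b c. 0 < b \<Longrightarrow> b < c \<Longrightarrow> emeasure \<nu> {b<..<c} < \<infinity>"
  shows "sigma_finite_measure \<nu>"
proof
  let ?A = "range (\<lambda>n::nat. {1 / (real n + 2) <..< real n + 1})"
  have "\<Union> ?A = ({0<..}::real set)"
  proof (auto)
    fix x :: real assume x: "0 < x"
    obtain n :: nat where n: "x + 1/x \<le> real n" using real_arch_simple by blast
    have "0 < 1/x" using x by simp
    then have "x < real n + 1" "1/x < real n + 2" using n x by linarith+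
    then have "1 / (real n + 2) < x" using x by (simp add: field_simps)
    then show "\<exists>n. 1 / (real n + 2) < x \<and> x < real n + 1" using \<open>x < real n + 1\<close> by auto
  next
    fix x :: real and n :: nat assume "1 / (real n + 2) < x"
    moreover have "0 < 1 / (real n + 2)" by simp
    ultimately show "0 < x" by linarith
  qed
  then show "\<exists>A. countable A \<and> A \<subseteq> sets \<nu> \<and> \<Union> A = space \<nu> \<and> (\<forall>a\<in>A. emeasure \<nu> a \<noteq> \<infinity>)"
  proof (intro exI[of _ ?A] conjI)
    show "\<forall>a\<in>?A. emeasure \<nu> a \<noteq> \<infinity>"
    proof
      fix a assume "a \<in> ?A"
      then obtain n :: nat where "a = {1 / (real n + 2) <..< real n + 1}" by auto
      moreover have "1*(1::real) < (real n + 1) * (real n + 2)"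
        by (rule mult_le_less_imp_less) auto
      then have "(0::real) < 1 / (real n + 2)" "1 / (real n + 2) < real n + 1"
        by (auto simp: divide_less_eq)
      ultimately show "emeasure \<nu> a \<noteq> \<infinity>" using T[of "1 / (real n + 2)" "real n + 1"] by simp
    qed
    show "?A \<subseteq> sets \<nu>"
    proof safe
      fix n :: nat
      have p: "(0::real) < 1 / (real n + 2)" by simp
      have "{1 / (real n + 2)<..<real n + 1} = {0<..} \<inter> {1 / (real n + 2)<..<real n + 1}"
      proof (intro set_eqI iffI)
        fix x assume "x \<in> {1 / (real n + 2)<..<real n + 1}"
        then have "1 / (real n + 2) < x" by simp
        with p have "0 < x" by linarith
        then show "x \<in> {0<..} \<inter> {1 / (real n + 2)<..<real n + 1}" using \<open>x \<in> _\<close> by simp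
      qed simp
      then show "{1 / (real n + 2)<..<real n + 1} \<in> sets \<nu>"
        unfolding S sets_restrict_space by (auto intro!: image_eqI)
    qed
    show "\<Union> ?A = space \<nu>" using \<open>\<Union> ?A = _\<close> sets_eq_imp_space_eq[OF S]
      by (simp add: space_restrict_space)
  qed simp
qed

lemma K_lpos_meas: "(\<lambda>s. K (s - u)) \<in> borel_measurable lpos"
  "(\<lambda>s. K (u - s)) \<in> borel_measurable lpos"
  by (intro measurable_compose[OF _ K_meas] borel_measurable_diff lpos_meas; simp)+

context
  fixes \<mu> :: "real measure"
  assumes S: "sets \<mu> = sets (restrict_space borel {0<..})"
    and T: "\<And>b. b > 0 \<Longrightarrow> emeasure \<mu> {b<..} < \<infinity>"
begin

interpretation sigma_finite_measure \<mu> by (rule sigma_finite_mu[OF S T])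
interpretation L: sigma_finite_measure lpos by (rule sigma_finite_lpos)
interpretation P: pair_sigma_finite lpos \<mu> ..

lemma K_mu_meas: "(\<lambda>s. K (s - u)) \<in> borel_measurable \<mu>"
  by (intro measurable_compose[OF _ K_meas] borel_measurable_diff mu_meas[OF S] measurable_const) simp

lemma prod_meas:
  assumes [measurable]: "g \<in> borel_measurable (borel \<Otimes>\<^sub>M borel)"
  shows "(\<lambda>p. g (fst p, snd p)) \<in> borel_measurable (lpos \<Otimes>\<^sub>M \<mu>)"
proof -
  have "(\<lambda>p. (fst p, snd p)) \<in> measurable (lpos \<Otimes>\<^sub>M \<mu>) (borel \<Otimes>\<^sub>M borel)"
    by (intro measurable_Pair measurable_compose[OF measurable_snd mu_meas[OF S]]
         measurable_compose[OF measurable_fst lpos_meas])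
  then show ?thesis by (rule measurable_compose) simp
qed

lemma tail:
  assumes u: "0 < u"
  shows "abel_fun (abel \<mu>) u = emeasure \<mu> {u<..}"
proof -
  have am: "abel_fun \<mu> \<in> borel_measurable lpos"
    by (rule abel_fun_meas[OF S sigma_finite_measure_axioms])
  have "abel_fun (abel \<mu>) u = (\<integral>\<^sup>+ s. abel_fun \<mu> s * K (s - u) \<partial>lpos)"
    unfolding abel_def abel_fun_K[of "density lpos (abel_fun \<mu>)"]
    by (rule nn_integral_density[OF am K_lpos_meas(1)])
  also have "\<dots> = (\<integral>\<^sup>+ s. \<integral>\<^sup>+ t. K (t - s) * K (s - u) \<partial>\<mu> \<partial>lpos)"
    unfolding abel_fun_K by (intro nn_integral_cong nn_integral_multc[symmetric] K_mu_meas)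
  also have "\<dots> = (\<integral>\<^sup>+ t. \<integral>\<^sup>+ s. K (t - s) * K (s - u) \<partial>lpos \<partial>\<mu>)"
  proof (rule P.Fubini'[symmetric])
    have "(\<lambda>p. (\<lambda>(s,t). K (t - s) * K (s - u)) (fst p, snd p)) \<in> borel_measurable (lpos \<Otimes>\<^sub>M \<mu>)"
      by (rule prod_meas) measurable
    then show "(\<lambda>(s,t). K (t - s) * K (s - u)) \<in> borel_measurable (lpos \<Otimes>\<^sub>M \<mu>)" by simp
  qed
  also have "\<dots> = (\<integral>\<^sup>+ t. indicator {u<..} t \<partial>\<mu>)"
  proof (rule nn_integral_cong)
    fix t
    have "(\<integral>\<^sup>+ s. K (t - s) * K (s - u) \<partial>lpos) = (\<integral>\<^sup>+ s. K (s - u) * K (t - s) \<partial>lborel)"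
      unfolding nn_integral_lpos
      using u by (intro nn_integral_cong) (auto simp: K_def indicator_def mult.commute)
    also have "\<dots> = indicator {u<..} t"
    proof (cases "u < t")
      case True then show ?thesis by (simp add: K_beta)
    next
      case False
      then have "\<And>s. K (s - u) * K (t - s) = 0" by (auto simp: K_def)
      then show ?thesis using False by (simp del: mult_eq_0_iff)
    qed
    finally show "(\<integral>\<^sup>+ s. K (t - s) * K (s - u) \<partial>lpos) = indicator {u<..} t" .
  qed
  also have "\<dots> = emeasure \<mu> {u<..}"
    using Ioi_mu[OF S, of u] u by simp
  finally show ?thesis .
qed


end

lemma inner_bound:
  assumes b: "0 < b" "b < c"
  shows "(\<integral>\<^sup>+ u. K (t - u) * indicator {b<..<c} u \<partial>lpos) \<le> ennreal (sqrt (pi * c)) * indicator {b<..} t"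
proof (cases "b < t")
  case False
  then have "\<And>u. K (t - u) * indicator {b<..<c} u = 0" by (auto simp: K_def indicator_def)
  then show ?thesis by (simp del: mult_eq_0_iff)
next
  case True
  have "(\<integral>\<^sup>+ u. K (t - u) * indicator {b<..<c} u \<partial>lpos)
      \<le> (\<integral>\<^sup>+ u. ennreal (sqrt (pi * c)) * (K (u - 0) * K (t - u)) \<partial>lborel)"
    unfolding nn_integral_lpos
  proof (intro nn_integral_mono)
    fix u :: real
    show "K (t - u) * indicator {b<..<c} u * indicator {0<..} u \<le> ennreal (sqrt (pi * c)) * (K (u - 0) * K (t - u))"
    proof (cases "b < u \<and> u < c")
      case False then show ?thesis by (auto simp: indicator_def)
    next
      case True
      then have u: "0 < u" "u < c" using b by auto
      have "sqrt (pi * u) \<le> sqrt (pi * c)" using u by simp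
      moreover have "0 < sqrt (pi * u)" using u by simp
      ultimately have "1 \<le> sqrt (pi * c) * (1 / sqrt (pi * u))" by (simp add: field_simps)
      then have "ennreal 1 \<le> ennreal (sqrt (pi * c) * (1 / sqrt (pi * u)))" by (rule ennreal_leI)
      also have "\<dots> = ennreal (sqrt (pi * c)) * K (u - 0)"
        using u by (simp add: K_def ennreal_mult'[symmetric] del: divide_inverse)
      finally have one: "1 \<le> ennreal (sqrt (pi * c)) * K (u - 0)" by simp
      have "K (t - u) * indicator {b<..<c} u * indicator {0<..} u = 1 * K (t - u)"
        using True u by (simp add: indicator_def)
      also have "\<dots> \<le> (ennreal (sqrt (pi * c)) * K (u - 0)) * K (t - u)"
        by (rule mult_right_mono[OF one]) simp
      finally show ?thesis by (simp add: mult.assoc)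
    qed
  qed
  also have "\<dots> = ennreal (sqrt (pi * c)) * (\<integral>\<^sup>+ u. K (u - 0) * K (t - u) \<partial>lborel)"
    by (intro nn_integral_cmult) measurable
  also have "\<dots> = ennreal (sqrt (pi * c)) * indicator {b<..} t"
    using True b K_beta[of 0 t] by simp
  finally show ?thesis .
qed

context
  fixes \<mu> :: "real measure"
  assumes S: "sets \<mu> = sets (restrict_space borel {0<..})"
    and T: "\<And>b. b > 0 \<Longrightarrow> emeasure \<mu> {b<..} < \<infinity>"
begin

interpretation sigma_finite_measure \<mu> by (rule sigma_finite_mu[OF S T])
interpretation L: sigma_finite_measure lpos by (rule sigma_finite_lpos)
interpretation P: pair_sigma_finite lpos \<mu> ..

lemma definable: "abel_definable \<mu>"
  unfolding abel_definable_def
proof (intro allI impI)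
  fix b c :: real assume b: "0 < b" "b < c"
  have am: "abel_fun \<mu> \<in> borel_measurable lpos"
    by (rule abel_fun_meas[OF S sigma_finite_measure_axioms])
  have "emeasure (abel \<mu>) {b<..<c} = (\<integral>\<^sup>+ u. abel_fun \<mu> u * indicator {b<..<c} u \<partial>lpos)"
    unfolding abel_def using b by (intro emeasure_density[OF am] Ioo_lpos) simp
  also have "\<dots> = (\<integral>\<^sup>+ u. \<integral>\<^sup>+ t. K (t - u) * indicator {b<..<c} u \<partial>\<mu> \<partial>lpos)"
    unfolding abel_fun_K by (intro nn_integral_cong nn_integral_multc[symmetric] K_mu_meas[OF S T])
  also have "\<dots> = (\<integral>\<^sup>+ t. \<integral>\<^sup>+ u. K (t - u) * indicator {b<..<c} u \<partial>lpos \<partial>\<mu>)"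
  proof (rule P.Fubini'[symmetric])
    have "(\<lambda>p. (\<lambda>(u,t). K (t - u) * indicator {b<..<c} u) (fst p, snd p)) \<in> borel_measurable (lpos \<Otimes>\<^sub>M \<mu>)"
      by (rule prod_meas[OF S T]) measurable
    then show "(\<lambda>(u,t). K (t - u) * indicator {b<..<c} u) \<in> borel_measurable (lpos \<Otimes>\<^sub>M \<mu>)" by simp
  qed
  also have "\<dots> \<le> (\<integral>\<^sup>+ t. ennreal (sqrt (pi * c)) * indicator {b<..} t \<partial>\<mu>)"
    by (intro nn_integral_mono inner_bound b)
  also have "\<dots> = ennreal (sqrt (pi * c)) * emeasure \<mu> {b<..}"
    using b by (intro nn_integral_cmult_indicator Ioi_mu[OF S]) simp
  also have "\<dots> < \<infinity>"
    using T[OF b(1)] by (simp add: ennreal_mult_less_top)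
  finally show "emeasure (abel \<mu>) {b<..<c} < \<infinity>" .
qed

end


lemma density_cong_space:
  "(\<And>x. x \<in> space M \<Longrightarrow> f x = g x) \<Longrightarrow> density M f = density M g"
  unfolding density_def by (intro arg_cong[where f="measure_of (space M) (sets M)"] ext nn_integral_cong) auto

context
  fixes \<mu> :: "real measure"
  assumes S: "sets \<mu> = sets (restrict_space borel {0<..})"
    and T: "\<And>b. b > 0 \<Longrightarrow> emeasure \<mu> {b<..} < \<infinity>"
begin

lemma abel2: "abel (abel \<mu>) = density lpos (\<lambda>u. emeasure \<mu> {u<..})"
  unfolding abel_def[of "abel \<mu>"]
  by (rule density_cong_space) (simp add: space_lpos tail[OF S T])

lemma tail_meas: "(\<lambda>u. emeasure \<mu> {u<..}) \<in> borel_measurable lpos"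
proof -
  have "sigma_finite_measure (abel \<mu>)"
    using definable[OF S T] by (intro sigma_finite_loc[OF sets_abel]) (auto simp: abel_definable_def)
  from abel_fun_meas[OF sets_abel this] show ?thesis
    by (rule measurable_cong[THEN iffD1, rotated]) (simp add: space_lpos tail[OF S T])
qed

lemma definable2: "abel_definable (abel \<mu>)"
  unfolding abel_definable_def abel2
proof (intro allI impI)
  fix b c :: real assume b: "0 < b" "b < c"
  have "emeasure (density lpos (\<lambda>u. emeasure \<mu> {u<..})) {b<..<c}
      = (\<integral>\<^sup>+ u. emeasure \<mu> {u<..} * indicator {b<..<c} u \<partial>lpos)"
    using b by (intro emeasure_density tail_meas Ioo_lpos) simp
  also have "\<dots> \<le> (\<integral>\<^sup>+ u. emeasure \<mu> {b<..} * indicator {b<..<c} u \<partial>lpos)"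
  proof (intro nn_integral_mono)
    fix u show "emeasure \<mu> {u<..} * indicator {b<..<c} u \<le> emeasure \<mu> {b<..} * indicator {b<..<c} u"
      using b by (cases "b < u") (auto simp: indicator_def intro!: emeasure_mono Ioi_mu[OF S])
  qed
  also have "\<dots> = emeasure \<mu> {b<..} * ennreal (c - b)"
    using b by (simp add: nn_integral_cmult_indicator Ioo_lpos emeasure_lpos_Ioo)
  also have "\<dots> < \<infinity>" using T[OF b(1)] by (simp add: ennreal_mult_less_top)
  finally show "emeasure (density lpos (\<lambda>u. emeasure \<mu> {u<..})) {b<..<c} < \<infinity>" .
qed

lemma tail_SUP:
  assumes u: "0 \<le> u"
  shows "emeasure \<mu> {u<..} = (SUP n. emeasure \<mu> {u + 1 / Suc n<..})"
proof -
  have "(SUP n. emeasure \<mu> {u + 1 / Suc n<..}) = emeasure \<mu> (\<Union>n. {u + 1 / Suc n<..})"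
  proof (rule SUP_emeasure_incseq)
    show "range (\<lambda>n. {u + 1 / real (Suc n)<..}) \<subseteq> sets \<mu>"
      using u by (auto intro!: Ioi_mu[OF S] add_nonneg_nonneg simp del: of_nat_Suc)
    show "incseq (\<lambda>n. {u + 1 / real (Suc n)<..})"
      by (auto simp: incseq_def frac_le simp del: of_nat_Suc intro!: order.strict_trans1[rotated])
  qed
  also have "(\<Union>n. {u + 1 / Suc n<..}) = {u<..}"
  proof (auto simp del: of_nat_Suc)
    fix x assume "u < x"
    then obtain n where "1 / Suc n < x - u"
      using reals_Archimedean by (metis diff_gt_0_iff_gt inverse_eq_divide)
    then show "\<exists>n. u + 1 / real (Suc n) < x" by (intro exI[of _ n]) linarith
  next
    fix x n assume "u + 1 / real (Suc n) < x"
    moreover have "0 < 1 / real (Suc n)" by simp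
    ultimately show "u < x" by linarith
  qed
  finally show ?thesis by simp
qed

end

lemma tail_le:
  assumes S: "sets \<mu> = sets (restrict_space borel {0<..})"
    and T: "\<And>b. b > 0 \<Longrightarrow> emeasure \<mu> {b<..} < \<infinity>"
    and S': "sets \<nu> = sets (restrict_space borel {0<..})"
    and T': "\<And>b. b > 0 \<Longrightarrow> emeasure \<nu> {b<..} < \<infinity>"
    and eq: "abel \<mu> = abel \<nu>"
    and u: "0 \<le> u"
  shows "emeasure \<mu> {u<..} \<le> emeasure \<nu> {u<..}"
proof -
  have D: "density lpos (\<lambda>u. emeasure \<mu> {u<..}) = density lpos (\<lambda>u. emeasure \<nu> {u<..})"
    using abel2[OF S T] abel2[OF S' T'] eq by metis
  have "\<And>n. emeasure \<mu> {u + 1 / Suc n<..} \<le> emeasure \<nu> {u<..}"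
  proof -
    fix n :: nat
    define h where "h = 1 / real (Suc n)"
    have h: "0 < h" by (simp add: h_def)
    have "ennreal h * emeasure \<mu> {u + h<..} = (\<integral>\<^sup>+ x. emeasure \<mu> {u + h<..} * indicator {u<..<u+h} x \<partial>lpos)"
      using u h by (simp add: nn_integral_cmult_indicator Ioo_lpos emeasure_lpos_Ioo mult.commute)
    also have "\<dots> \<le> (\<integral>\<^sup>+ x. emeasure \<mu> {x<..} * indicator {u<..<u+h} x \<partial>lpos)"
    proof (intro nn_integral_mono)
      fix x show "emeasure \<mu> {u + h<..} * indicator {u<..<u + h} x \<le> emeasure \<mu> {x<..} * indicator {u<..<u + h} x"
        using u by (cases "u < x \<and> x < u + h") (auto simp: indicator_def intro!: emeasure_mono Ioi_mu[OF S])
    qed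
    also have "\<dots> = emeasure (density lpos (\<lambda>u. emeasure \<mu> {u<..})) {u<..<u+h}"
      using u by (intro emeasure_density[symmetric] tail_meas[OF S T] Ioo_lpos)
    also have "\<dots> = emeasure (density lpos (\<lambda>u. emeasure \<nu> {u<..})) {u<..<u+h}"
      by (simp add: D)
    also have "\<dots> = (\<integral>\<^sup>+ x. emeasure \<nu> {x<..} * indicator {u<..<u+h} x \<partial>lpos)"
      using u by (intro emeasure_density tail_meas[OF S' T'] Ioo_lpos)
    also have "\<dots> \<le> (\<integral>\<^sup>+ x. emeasure \<nu> {u<..} * indicator {u<..<u+h} x \<partial>lpos)"
    proof (intro nn_integral_mono)
      fix x show "emeasure \<nu> {x<..} * indicator {u<..<u + h} x \<le> emeasure \<nu> {u<..} * indicator {u<..<u + h} x"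
        using u by (cases "u < x \<and> x < u + h") (auto simp: indicator_def intro!: emeasure_mono Ioi_mu[OF S'])
    qed
    also have "\<dots> = ennreal h * emeasure \<nu> {u<..}"
      using u h by (simp add: nn_integral_cmult_indicator Ioo_lpos emeasure_lpos_Ioo mult.commute)
    finally have "ennreal h * emeasure \<mu> {u + h<..} \<le> ennreal h * emeasure \<nu> {u<..}" .
    then show "emeasure \<mu> {u + 1 / Suc n<..} \<le> emeasure \<nu> {u<..}"
      using h by (simp add: ennreal_mult_le_mult_iff h_def del: of_nat_Suc)
  qed
  then have "(SUP n. emeasure \<mu> {u + 1 / Suc n<..}) \<le> emeasure \<nu> {u<..}"
    by (rule SUP_least)
  then show ?thesis using tail_SUP[OF S T u] by simp
qed


lemma sets_gen:
  "sets (restrict_space borel ({0<..}::real set)) = sigma_sets {0<..} ((\<inter>) {0<..} ` range greaterThan)"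
proof -
  have b: "sets (borel::real measure) = sigma_sets UNIV (range greaterThan)"
    by (subst borel_Ioi) simp
  have "{0<..} \<in> sigma_sets UNIV (range greaterThan :: real set set)" by auto
  from sigma_sets_Int[OF this] show ?thesis
    unfolding sets_restrict_space b by simp
qed

lemma unique:
  assumes S: "sets \<mu> = sets (restrict_space borel {0<..})"
    and T: "\<And>b. b > 0 \<Longrightarrow> emeasure \<mu> {b<..} < \<infinity>"
    and S': "sets \<nu> = sets (restrict_space borel {0<..})"
    and T': "\<And>b. b > 0 \<Longrightarrow> emeasure \<nu> {b<..} < \<infinity>"
    and eq: "abel \<mu> = abel \<nu>"
  shows "\<mu> = \<nu>"
proof -
  have F: "emeasure \<mu> {u<..} = emeasure \<nu> {u<..}" if "0 \<le> u" for u
    using tail_le[OF S T S' T' eq that] tail_le[OF S' T' S T eq[symmetric] that] by (rule antisym)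
  let ?E = "(\<inter>) {0<..} ` range greaterThan :: real set set"
  show ?thesis
  proof (rule measure_eqI_generator_eq[where \<Omega>="{0<..}" and E="?E" and A="\<lambda>i. {0<..} \<inter> {1 / Suc i<..}"])
    show "Int_stable ?E"
    proof (rule Int_stableI)
      fix a b assume "a \<in> ?E" "b \<in> ?E"
      then obtain x y where "a = {0<..} \<inter> {x<..}" "b = {0<..} \<inter> {y<..}" by auto
      then have "a \<inter> b = {0<..} \<inter> {max x y<..}" by auto
      then show "a \<inter> b \<in> ?E" by auto
    qed
    show "?E \<subseteq> Pow {0<..}" by auto
    show "sets \<mu> = sigma_sets {0<..} ?E" using S sets_gen by simp
    show "sets \<nu> = sigma_sets {0<..} ?E" using S' sets_gen by simp
    fix X assume "X \<in> ?E"
    then obtain x where "X = {0<..} \<inter> {x<..}" by auto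
    then have "X = {max x 0<..}" by auto
    then show "emeasure \<mu> X = emeasure \<nu> X" using F[of "max x 0"] by simp
  next
    show "range (\<lambda>i. {0<..} \<inter> {1 / real (Suc i)<..}) \<subseteq> ?E" by auto
    show "(\<Union>i. {0<..} \<inter> {1 / real (Suc i)<..}) = {0<..}"
    proof (auto simp del: of_nat_Suc)
      fix x :: real assume "0 < x"
      then obtain n where "1 / Suc n < x"
        using reals_Archimedean by (metis inverse_eq_divide)
      then show "\<exists>n. 1 / real (Suc n) < x" by blast
    qed
    fix i
    have p: "(0::real) < 1 / Suc i" by simp
    have "{0<..} \<inter> {1 / real (Suc i)<..} = {1 / real (Suc i)<..}"
    proof (intro set_eqI iffI)
      fix x assume "x \<in> {1 / real (Suc i)<..}"
      then have "1 / real (Suc i) < x" by simp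
      with p have "0 < x" by linarith
      then show "x \<in> {0<..} \<inter> {1 / real (Suc i)<..}" using \<open>x \<in> _\<close> by simp
    qed simp
    then show "emeasure \<mu> ({0<..} \<inter> {1 / real (Suc i)<..}) \<noteq> \<infinity>"
      using T[of "1 / Suc i"] by simp
  qed
qed

theorem lemma2p8:
  fixes \<rho> :: "real measure"
  assumes "sets \<rho> = sets (restrict_space borel {0<..})"
    and "\<And>b. b > 0 \<Longrightarrow> emeasure \<rho> {b<..} < \<infinity>"
  shows "abel_definable \<rho> \<and> abel_definable (abel \<rho>)
    \<and> abel (abel \<rho>) = density lpos (\<lambda>u. emeasure \<rho> {u<..})
    \<and> (\<forall>\<rho>'. sets \<rho>' = sets (restrict_space borel {0<..})
          \<longrightarrow> (\<forall>b>0. emeasure \<rho>' {b<..} < \<infinity>)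
          \<longrightarrow> abel \<rho>' = abel \<rho> \<longrightarrow> \<rho>' = \<rho>)"
  using definable[OF assms] definable2[OF assms] abel2[OF assms] unique[OF _ _ assms]
  by blast

end
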